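(* Let $d\geq 2$. Every antipodal configuration $\omega_{2d}=\{\mathbf x_1,\ldots,\mathbf x_{2d}\}$ of $2d$ points on $S^{d-1}\subset\mathbb R^d$ is centered, i.e. there exists $\mathbf y\in S^{d-1}$ with $-\frac{1}{\sqrt d}\leq \mathbf y\cdot\mathbf x_i\leq\frac1{\sqrt d}$ for all $i=1,\ldots,2d$.
   Context: $S^{d-1}$ is the unit sphere in $\mathbb R^d$. A configuration is a list of points (points may coincide). A configuration on $S^{d-1}$ is antipodal if together with a point $\mathbf x$ it contains $-\mathbf x$. *)

theory Defs
  imports "HOL-Analysis.Analysis"
begin

definition antipodal_config :: "nat \<Rightarrow> (nat \<Rightarrow> 'a::real_normed_vector) \<Rightarrow> bool" where
  "antipodal_config N x \<longleftrightarrow> (\<forall>i<N. \<exists>j<N. x j = - x i)"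

end

theory Submission
  imports Defs
begin

lemma greedy_signs:
  fixes w :: "'b \<Rightarrow> 'a::real_inner"
  assumes "finite F"
  shows "\<exists>e. (\<forall>t. e t = 1 \<or> e t = -1) \<and>
     (\<Sum>t\<in>F. (norm (w t))\<^sup>2) \<le> (norm (\<Sum>t\<in>F. e t *\<^sub>R w t))\<^sup>2"
  using assms
proof (induction F rule: finite_induct)
  case empty
  then show ?case by (intro exI[of _ "\<lambda>_. 1"]) auto
next
  case (insert a F)
  then obtain e where e: "\<forall>t. e t = 1 \<or> e t = -1"
    "(\<Sum>t\<in>F. (norm (w t))\<^sup>2) \<le> (norm (\<Sum>t\<in>F. e t *\<^sub>R w t))\<^sup>2" by blast
  define S where "S = (\<Sum>t\<in>F. e t *\<^sub>R w t)"
  define s :: real where "s = (if S \<bullet> w a \<ge> 0 then 1 else -1)"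
  define e' where "e' = e(a := s)"
  have sum_eq: "(\<Sum>t\<in>F. e' t *\<^sub>R w t) = S"
    unfolding S_def e'_def using insert(2) by (intro sum.cong) auto
  have "(\<Sum>t\<in>insert a F. e' t *\<^sub>R w t) = s *\<^sub>R w a + S"
    using insert(1,2) sum_eq by (simp add: e'_def)
  moreover have "(norm (s *\<^sub>R w a + S))\<^sup>2 = (norm (w a))\<^sup>2 + (norm S)\<^sup>2 + 2 * s * (S \<bullet> w a)"
    unfolding power2_norm_eq_inner using s_def
    by (simp add: inner_add_left inner_add_right inner_commute algebra_simps)
  moreover have "s * (S \<bullet> w a) \<ge> 0" unfolding s_def by auto
  ultimately have "(norm (w a))\<^sup>2 + (\<Sum>t\<in>F. (norm (w t))\<^sup>2) \<le> (norm (\<Sum>t\<in>insert a F. e' t *\<^sub>R w t))\<^sup>2"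
    using e(2) unfolding S_def by simp
  moreover have "\<forall>t. e' t = 1 \<or> e' t = -1" using e unfolding e'_def s_def by auto
  ultimately show ?case using insert(1,2) by (intro exI[of _ e']) simp
qed

lemma main_lemma:
  fixes T :: "'a::euclidean_space set"
  assumes fin: "finite T" and cardT: "card T \<le> DIM('a)" and unit: "\<forall>t\<in>T. norm t = 1"
  shows "\<exists>y. norm y = 1 \<and> (\<forall>t\<in>T. \<bar>y \<bullet> t\<bar> \<le> 1 / sqrt (real DIM('a)))"
proof (cases "dim T < DIM('a)")
  case True
  then obtain u where u: "u \<noteq> 0" "\<And>v. v \<in> span T \<Longrightarrow> orthogonal u v"
    using orthogonal_to_subspace_exists[OF True] by blast
  show ?thesis
  proof (intro exI[of _ "u /\<^sub>R norm u"] conjI ballI)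
    show "norm (u /\<^sub>R norm u) = 1" using u by simp
    fix t assume "t \<in> T"
    then have "u \<bullet> t = 0" using u(2) span_base unfolding orthogonal_def by blast
    then show "\<bar>(u /\<^sub>R norm u) \<bullet> t\<bar> \<le> 1 / sqrt (real DIM('a))" by simp
  qed
next
  case False
  have dimle: "dim T \<le> card T" using fin by (intro dim_le_card) (auto intro: span_base)
  have dimT: "dim T = DIM('a)" using False dim_subset_UNIV[of T] by (metis dim_subset_UNIV le_antisym not_less)
  have cT: "card T = DIM('a)" using dimle dimT cardT by linarith
  have spanT: "span T = UNIV" using dimT dim_eq_full by blast
  have "\<forall>t\<in>T. \<exists>w. w \<bullet> t = 1 \<and> (\<forall>t'\<in>T - {t}. w \<bullet> t' = 0)"
  proof
    fix t assume tT: "t \<in> T"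
    have "dim (T - {t}) \<le> card (T - {t})"
      using fin by (intro dim_le_card) (auto intro: span_base)
    also have "\<dots> < DIM('a)" using cT tT fin
      by (metis DIM_positive card_Diff_singleton diff_less zero_less_one)
    finally have lt: "dim (T - {t}) < DIM('a)" .
    obtain u where u: "u \<noteq> 0" "\<And>v. v \<in> span (T - {t}) \<Longrightarrow> orthogonal u v"
      using orthogonal_to_subspace_exists[OF lt] by blast
    have o: "\<forall>t'\<in>T - {t}. u \<bullet> t' = 0"
    proof
      fix t' assume "t' \<in> T - {t}"
      then have "orthogonal u t'" by (intro u(2) span_base)
      then show "u \<bullet> t' = 0" by (simp add: orthogonal_def)
    qed
    have "u \<bullet> t \<noteq> 0"
    proof
      assume "u \<bullet> t = 0"
      then have ov: "\<And>v. v \<in> T \<Longrightarrow> orthogonal u v" using o unfolding orthogonal_def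
        by (case_tac "v = t") auto
      have "u \<in> span T" using spanT by simp
      then have "orthogonal u u" using ov by (rule orthogonal_to_span)
      then show False using u(1) unfolding orthogonal_def by simp
    qed
    then show "\<exists>w. w \<bullet> t = 1 \<and> (\<forall>t'\<in>T - {t}. w \<bullet> t' = 0)"
      using o by (intro exI[of _ "u /\<^sub>R (u \<bullet> t)"]) auto
  qed
  then obtain w where w: "\<And>t. t \<in> T \<Longrightarrow> w t \<bullet> t = 1"
    "\<And>t t'. t \<in> T \<Longrightarrow> t' \<in> T \<Longrightarrow> t' \<noteq> t \<Longrightarrow> w t \<bullet> t' = 0"
    by (metis DiffI singletonD)
  have wn: "norm (w t) \<ge> 1" if "t \<in> T" for t
    using norm_cauchy_schwarz[of "w t" t] w(1)[OF that] unit that by simp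
  obtain e where e: "\<forall>t. e t = 1 \<or> e t = -1"
    "(\<Sum>t\<in>T. (norm (w t))\<^sup>2) \<le> (norm (\<Sum>t\<in>T. e t *\<^sub>R w t))\<^sup>2"
    using greedy_signs[OF fin, of w] by blast
  define z where "z = (\<Sum>t\<in>T. e t *\<^sub>R w t)"
  have "(\<Sum>t\<in>T. (1::real)) \<le> (\<Sum>t\<in>T. (norm (w t))\<^sup>2)"
    using wn by (intro sum_mono) (simp add: one_le_power)
  then have zb: "real DIM('a) \<le> (norm z)\<^sup>2" using e(2) cT unfolding z_def by simp
  have "0 < real DIM('a)" by simp
  then have "0 < (norm z)\<^sup>2" using zb by linarith
  then have "z \<noteq> 0" by auto
  then have zpos: "norm z > 0" by simp
  have sq: "sqrt (real DIM('a)) \<le> norm z" using zb real_sqrt_le_mono[OF zb] by simp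
  have zt: "z \<bullet> t = e t" if "t \<in> T" for t
  proof -
    have "z \<bullet> t = (\<Sum>s\<in>T. e s * (w s \<bullet> t))" unfolding z_def by (simp add: inner_sum_left)
    also have "\<dots> = (\<Sum>s\<in>{t}. e s * (w s \<bullet> t))"
      using w(2) that fin by (intro sum.mono_neutral_right) auto
    also have "\<dots> = e t" using w(1) that by simp
    finally show ?thesis .
  qed
  show ?thesis
  proof (intro exI[of _ "z /\<^sub>R norm z"] conjI ballI)
    show "norm (z /\<^sub>R norm z) = 1" using zpos by simp
    fix t assume "t \<in> T"
    then have "\<bar>(z /\<^sub>R norm z) \<bullet> t\<bar> = 1 / norm z" using zt e(1) zpos
      by (metis abs_1 abs_divide abs_minus_cancel abs_norm_cancel divide_inverse_commute inner_scaleR_left mult.commute)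
    also have "\<dots> \<le> 1 / sqrt (real DIM('a))" using sq zpos
      by (intro divide_left_mono) (auto intro: mult_pos_pos)
    finally show "\<bar>(z /\<^sub>R norm z) \<bullet> t\<bar> \<le> 1 / sqrt (real DIM('a))" .
  qed
qed

lemma halve:
  fixes S :: "'a::real_vector set"
  assumes "finite S" "\<forall>s\<in>S. -s \<in> S \<and> s \<noteq> -s"
  shows "\<exists>T\<subseteq>S. S \<subseteq> T \<union> uminus ` T \<and> 2 * card T \<le> card S"
  using assms
proof (induction "card S" arbitrary: S rule: less_induct)
  case less
  show ?case
  proof (cases "S = {}")
    case True then show ?thesis by auto
  next
    case False
    then obtain s where s: "s \<in> S" by blast
    define S' where "S' = S - {s, -s}"
    have ms: "-s \<in> S" "s \<noteq> -s" using less.prems s by auto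
    have c2: "card {s, -s} = 2" using ms by simp
    have "card {s, -s} \<le> card S" using ms s less.prems(1) by (intro card_mono) auto
    then have cS: "card S = card S' + 2" unfolding S'_def using ms s less.prems(1) c2
      by (simp add: card_Diff_subset)
    have "\<forall>x\<in>S'. -x \<in> S' \<and> x \<noteq> -x" unfolding S'_def using less.prems(2) by auto
    then obtain T' where T': "T' \<subseteq> S'" "S' \<subseteq> T' \<union> uminus ` T'" "2 * card T' \<le> card S'"
    proof -
      have "card S' < card S" using cS by simp
      moreover have "finite S'" unfolding S'_def using less.prems(1) by simp
      ultimately show ?thesis using less.hyps[of S'] that \<open>\<forall>x\<in>S'. -x \<in> S' \<and> x \<noteq> -x\<close> by blast
    qed
    have "s \<notin> T'" using T'(1) unfolding S'_def by auto
    moreover have "finite T'" using T'(1) less.prems(1) unfolding S'_def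
      using finite_subset by blast
    ultimately have "card (insert s T') = card T' + 1" by simp
    moreover have "insert s T' \<subseteq> S" using T'(1) s unfolding S'_def by auto
    moreover have "S \<subseteq> insert s T' \<union> uminus ` insert s T'" using T'(2) unfolding S'_def
      by (auto simp: image_iff)
    ultimately show ?thesis using T'(3) cS by (intro exI[of _ "insert s T'"]) auto
  qed
qed

theorem corollary3p2:
  fixes x :: "nat \<Rightarrow> real ^ 'n"
  assumes "CARD('n) \<ge> 2"
    and "\<forall>i<2 * CARD('n). norm (x i) = 1"
    and "antipodal_config (2 * CARD('n)) x"
  shows "\<exists>y :: real ^ 'n. norm y = 1 \<and>
           (\<forall>i<2 * CARD('n). - 1 / sqrt (real CARD('n)) \<le> y \<bullet> x i \<and>
                              y \<bullet> x i \<le> 1 / sqrt (real CARD('n)))"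
proof -
  define S where "S = x ` {..<2 * CARD('n)}"
  have finS: "finite S" unfolding S_def by simp
  have cS: "card S \<le> 2 * CARD('n)" unfolding S_def using card_image_le by fastforce
  have "\<forall>s\<in>S. -s \<in> S \<and> s \<noteq> -s"
  proof
    fix s assume "s \<in> S"
    then obtain i where i: "i < 2 * CARD('n)" "s = x i" unfolding S_def by auto
    then obtain j where "j < 2 * CARD('n)" "x j = - x i"
      using assms(3) unfolding antipodal_config_def by blast
    moreover have "s \<noteq> -s"
    proof
      assume "s = -s"
      then have "s + s = 0" by (metis add.right_inverse)
      then have "(2::real) *\<^sub>R s = 0" by (simp add: scaleR_2)
      then have "s = 0" by simp
      then show False using assms(2) i by auto
    qed
    ultimately show "-s \<in> S \<and> s \<noteq> -s" using i unfolding S_def by (metis image_eqI lessThan_iff)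
  qed
  then obtain T where T: "T \<subseteq> S" "S \<subseteq> T \<union> uminus ` T" "2 * card T \<le> card S"
    using halve[OF finS] by blast
  have "finite T" using T(1) finS finite_subset by blast
  moreover have "card T \<le> DIM(real ^ 'n)" using T(3) cS by simp
  moreover have "\<forall>t\<in>T. norm t = 1" using T(1) assms(2) unfolding S_def by auto
  ultimately obtain y where y: "norm y = 1" "\<forall>t\<in>T. \<bar>y \<bullet> t\<bar> \<le> 1 / sqrt (real DIM(real ^ 'n))"
    using main_lemma by blast
  have bnd: "\<bar>y \<bullet> x i\<bar> \<le> 1 / sqrt (real CARD('n))" if "i < 2 * CARD('n)" for i
  proof -
    have "x i \<in> T \<union> uminus ` T" using T(2) that unfolding S_def by auto
    then show ?thesis using y(2) by auto
  qed
  have H: "\<forall>i<2 * CARD('n). - 1 / sqrt (real CARD('n)) \<le> y \<bullet> x i \<and>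
                              y \<bullet> x i \<le> 1 / sqrt (real CARD('n))"
  proof (intro allI impI)
    fix i assume "i < 2 * CARD('n)"
    then have h: "\<bar>y \<bullet> x i\<bar> \<le> 1 / sqrt (real CARD('n))" using bnd by blast
    have "- 1 / sqrt (real CARD('n)) = - (1 / sqrt (real CARD('n)))" by simp
    then show "- 1 / sqrt (real CARD('n)) \<le> y \<bullet> x i \<and> y \<bullet> x i \<le> 1 / sqrt (real CARD('n))"
      using h abs_le_iff[of "y \<bullet> x i"] by linarith
  qed
  show ?thesis using H y(1) by (intro exI[of _ y] conjI)
qed

end
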